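(* Let $K,N,f,d,Q$ be positive integers with $N\ge (K-1)d+3f+1$. Let $\mathbf{G}\in\{0,1\}^{QK\times N}$ be a matrix each of whose rows is either the all-zero row or contains at most $K-1$ zero entries. Let $\mathcal{F}\subseteq[N]$ with $|\mathcal{F}|\le f$ be the set of Byzantine nodes, and let $\mathcal{J}\subseteq[N]$ with $|\mathcal{J}|=N-f$ be a quorum. Suppose each node $j\in\mathcal{J}$ reports, for each $\ell\in[QK]$, a bit $\beta_{\ell,j}\in\{0,1\}$, where $\beta_{\ell,j}=\mathbf{G}_{\ell,j}$ whenever $j\notin\mathcal{F}$ (reports of Byzantine nodes are arbitrary). Then for every $\ell\in[QK]$, exactly one of the following holds: (i) $|\{j\in\mathcal{J}:\beta_{\ell,j}=0\}|\ge K+f$; (ii) $|\{j\in\mathcal{J}:\beta_{\ell,j}=1\}|\ge f+1$.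
   Context: In the protocol, $\mathbf{G}$'s $i$-th column is node $i$'s binary results vector; each row of $\mathbf{G}$ (computed honestly) is the zero pattern of a codeword of an $[N,K]$ MDS code, hence is all-zero or has at most $K-1$ zeros. A report of $0$ (resp. $1$) in entry $\ell$ is a partial signature under a $(K+f,N)$ (resp. $(f+1,N)$) threshold signature scheme, so (i) (resp. (ii)) means the leader can form a valid threshold signature endorsing $0$ (resp. $1$). Here $d\ge1$ is the degree of the verification polynomial. *)

theory Defs
  imports Main
begin

end

theory Submission
  imports Defs
begin

theorem lemma2:
  fixes K N f d Q :: nat
    and G :: "nat \<Rightarrow> nat \<Rightarrow> nat"
    and \<beta> :: "nat \<Rightarrow> nat \<Rightarrow> nat"
    and F J :: "nat set"
  assumes pos: "K > 0" "N > 0" "f > 0" "d > 0" "Q > 0"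
    and N_bound: "N \<ge> (K - 1) * d + 3 * f + 1"
    and G_binary: "\<And>l j. l < Q * K \<Longrightarrow> j < N \<Longrightarrow> G l j \<in> {0, 1}"
    and G_rows: "\<And>l. l < Q * K \<Longrightarrow>
        (\<forall>j < N. G l j = 0) \<or> card {j. j < N \<and> G l j = 0} \<le> K - 1"
    and F_sub: "F \<subseteq> {0..<N}" and F_card: "card F \<le> f"
    and J_sub: "J \<subseteq> {0..<N}" and J_card: "card J = N - f"
    and \<beta>_binary: "\<And>l j. l < Q * K \<Longrightarrow> j \<in> J \<Longrightarrow> \<beta> l j \<in> {0, 1}"
    and \<beta>_honest: "\<And>l j. l < Q * K \<Longrightarrow> j \<in> J \<Longrightarrow> j \<notin> F \<Longrightarrow> \<beta> l j = G l j"
  shows "\<forall>l < Q * K.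
           (card {j \<in> J. \<beta> l j = 0} \<ge> K + f) \<noteq> (card {j \<in> J. \<beta> l j = 1} \<ge> f + 1)"
proof (intro allI impI)
  fix l assume l: "l < Q * K"
  define Z where "Z = {j \<in> J. \<beta> l j = 0}"
  define Ones where "Ones = {j \<in> J. \<beta> l j = 1}"
  have finJ: "finite J" using J_sub finite_subset by blast
  have finF: "finite F" using F_sub finite_subset by blast
  have ZO: "Z \<union> Ones = J" using \<beta>_binary[OF l] unfolding Z_def Ones_def by auto
  have ZOd: "Z \<inter> Ones = {}" unfolding Z_def Ones_def by auto
  have fZ: "finite Z" "finite Ones" using finJ unfolding Z_def Ones_def by auto
  have sum: "card Z + card Ones = N - f"
    using card_Un_disjoint[OF fZ ZOd] ZO J_card by simp
  have "(K - 1) * d \<ge> K - 1" using pos(4) by simp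
  hence NK: "N \<ge> K + 3 * f" using N_bound pos(1) by linarith
  have "(card Z \<ge> K + f) \<noteq> (card Ones \<ge> f + 1)"
  proof (cases "\<forall>j < N. G l j = 0")
    case True
    have "Ones \<subseteq> F"
    proof
      fix j assume j: "j \<in> Ones"
      show "j \<in> F"
      proof (rule ccontr)
        assume "j \<notin> F"
        hence "\<beta> l j = G l j" using \<beta>_honest[OF l] j unfolding Ones_def by auto
        moreover have "j < N" using j J_sub unfolding Ones_def by auto
        ultimately show False using True j unfolding Ones_def by auto
      qed
    qed
    hence "card Ones \<le> f" using card_mono[OF finF, of Ones] F_card by linarith
    thus ?thesis using sum NK by linarith
  next
    case False
    hence c: "card {j. j < N \<and> G l j = 0} \<le> K - 1" using G_rows[OF l] by blast
    have "Z \<subseteq> F \<union> {j. j < N \<and> G l j = 0}"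
    proof
      fix j assume j: "j \<in> Z"
      show "j \<in> F \<union> {j. j < N \<and> G l j = 0}"
      proof (cases "j \<in> F")
        case False
        hence "\<beta> l j = G l j" using \<beta>_honest[OF l] j unfolding Z_def by auto
        moreover have "j < N" using j J_sub unfolding Z_def by auto
        ultimately show ?thesis using j unfolding Z_def by auto
      qed simp
    qed
    moreover have "finite (F \<union> {j. j < N \<and> G l j = 0})" using finF by auto
    ultimately have "card Z \<le> card (F \<union> {j. j < N \<and> G l j = 0})" by (rule card_mono[rotated])
    also have "\<dots> \<le> card F + card {j. j < N \<and> G l j = 0}" by (rule card_Un_le)
    finally have "card Z \<le> f + (K - 1)" using c F_card by linarith
    thus ?thesis using sum NK pos(1) by linarith
  qed
  thus "(card {j \<in> J. \<beta> l j = 0} \<ge> K + f) \<noteq> (card {j \<in> J. \<beta> l j = 1} \<ge> f + 1)"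
    unfolding Z_def Ones_def .
qed

end
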